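(* Let $R$ be a commutative ring with identity, let $A$ be a $2\times 2$ matrix over $R$, and let $\mathbf u$ be a unimodular row of length $2$ over $R$. Then $\mathbf u$ belongs to the submodule of $R^2$ generated by the rows of $A$ if and only if there exists an invertible $2\times 2$ matrix $P$ over $R$ such that $\mathbf u$ is the first row of $PA$.
   Context: A row $[r_1,\dots,r_n]$ over $R$ is unimodular if $r_1,\dots,r_n$ generate the unit ideal $R$. *)

theory Defs
  imports "HOL-Analysis.Analysis"
begin

definition unimodular_row :: "('a::comm_ring_1)^'n \<Rightarrow> bool" where
  "unimodular_row u \<longleftrightarrow> (\<exists>c::'a^'n. (\<Sum>i\<in>UNIV. c $ i * u $ i) = 1)"

definition row_submodule :: "('a::comm_ring_1)^'n^'m \<Rightarrow> ('a^'n) set" where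
  "row_submodule A = {v. \<exists>c::'a^'m. v = (\<Sum>i\<in>UNIV. c $ i *s row i A)}"

end

theory Submission
  imports Defs
begin

lemma row1_mult: "row 1 (P ** A) = (\<Sum>k\<in>UNIV. P $ 1 $ k *s row k A)"
  by (simp add: vec_eq_iff row_def matrix_matrix_mult_def sum_component)

lemma unimod_inv:
  fixes c1 c2 e1 e2 :: "'a::comm_ring_1"
  assumes "c1 * e1 + c2 * e2 = 1"
  shows "invertible (\<chi> i j. if i = (1::2) then (if j = (1::2) then c1 else c2)
                            else (if j = 1 then - e2 else e1))"
proof -
  let ?P = "(\<chi> i j. if i = (1::2) then (if j = (1::2) then c1 else c2)
                            else (if j = 1 then - e2 else e1)) :: 'a^2^2"
  let ?Q = "(\<chi> i j. if i = (1::2) then (if j = (1::2) then e1 else - c2)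
                            else (if j = 1 then e2 else c1)) :: 'a^2^2"
  have "?P ** ?Q = mat 1"
    using assms by (simp add: vec_eq_iff matrix_matrix_mult_def mat_def sum_2 forall_2 algebra_simps)
  moreover have "?Q ** ?P = mat 1"
    using assms by (simp add: vec_eq_iff matrix_matrix_mult_def mat_def sum_2 forall_2 algebra_simps)
  ultimately show ?thesis unfolding invertible_def by blast
qed

theorem lemma2p3:
  fixes A :: "('a::comm_ring_1)^2^2" and u :: "'a^2"
  assumes "unimodular_row u"
  shows "u \<in> row_submodule A \<longleftrightarrow> (\<exists>P::'a^2^2. invertible P \<and> row 1 (P ** A) = u)"
proof
  assume "u \<in> row_submodule A"
  then obtain c :: "'a^2" where uc: "u = (\<Sum>i\<in>UNIV. c $ i *s row i A)"
    unfolding row_submodule_def by blast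
  obtain d :: "'a^2" where d: "(\<Sum>i\<in>UNIV. d $ i * u $ i) = 1"
    using assms unfolding unimodular_row_def by blast
  have uk: "u $ k = c $ 1 * A $ 1 $ k + c $ 2 * A $ 2 $ k" for k
    using uc by (simp add: sum_2 row_def)
  define e1 where "e1 = d $ 1 * A $ 1 $ 1 + d $ 2 * A $ 1 $ 2"
  define e2 where "e2 = d $ 1 * A $ 2 $ 1 + d $ 2 * A $ 2 $ 2"
  have "c $ 1 * e1 + c $ 2 * e2 = 1"
    using d unfolding e1_def e2_def by (simp add: sum_2 uk algebra_simps)
  note inv = unimod_inv[OF this]
  let ?P = "(\<chi> i j. if i = (1::2) then (if j = (1::2) then c $ 1 else c $ 2)
                            else (if j = 1 then - e2 else e1)) :: 'a^2^2"
  have "row 1 (?P ** A) = u"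
    unfolding row1_mult uc by (simp add: sum_2)
  with inv show "\<exists>P::'a^2^2. invertible P \<and> row 1 (P ** A) = u" by blast
next
  assume "\<exists>P::'a^2^2. invertible P \<and> row 1 (P ** A) = u"
  then obtain P :: "'a^2^2" where "row 1 (P ** A) = u" by blast
  then show "u \<in> row_submodule A"
    unfolding row_submodule_def row1_mult by blast
qed

end
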